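(* Let $U:\mathcal{Z}^*\to[0,1]$ be a potential that is $\beta(k)$-deletion stable, $\mathcal{D}$ a distribution on $\mathcal{Z}$, $m\in\mathbb{N}$, $Z\subseteq\mathcal{Z}$ finite nonempty, $\varepsilon>0$, $\delta\in(0,1)$. Let $w_1,\dots,w_m>0$ with $\sum_k w_k=1$, and let $T\in\mathbb{N}$ be such that each $T_k:=w_kT$ is an integer. For each $k\in[m]$ and $t\in[T_k]$ draw independently $S_{k,t}\sim\mathcal{D}^{k-1}$, and for $z\in Z$ set $$\hat\nu_T(z)=\frac1T\sum_{k=1}^m\sum_{t=1}^{T_k}\frac{U(S_{k,t}\cup\{z\})-U(S_{k,t})}{w_k\,m}.$$ Then $\mathbb{E}[\hat\nu_T(z)]=\nu(z;U,\mathcal{D},m)$ for all $z\in Z$, and if $$T\ge\frac{2\ln(2|Z|/\delta)}{\varepsilon^2m^2}\sum_{k=1}^m\frac{\beta(k)^2}{w_k},$$ then with probability at least $1-\delta$, $|\hat\nu_T(z)-\nu(z;U,\mathcal{D},m)|\le\varepsilon$ for all $z\in Z$.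
   Context: $\mathcal{Z}^*=\bigcup_{n\ge0}\mathcal{Z}^n$; a potential is a measurable, permutation-invariant $U:\mathcal{Z}^*\to[0,1]$; $S\cup\{z\}$ is the tuple $S$ with $z$ appended. For non-increasing $\beta:\mathbb{N}\to[0,1]$, $U$ is $\beta(k)$-deletion stable if for all $k\in\mathbb{N}$, $S\in\mathcal{Z}^{k-1}$, $z\in\mathcal{Z}$: $|U(S\cup\{z\})-U(S)|\le\beta(k)$. Data Shapley value of entry $b_i$ in $B=(b_1,\dots,b_m)$: $\phi(b_i;U,B)=\frac1m\sum_{k=1}^m\binom{m-1}{k-1}^{-1}\sum_{I\subseteq[m]\setminus\{i\},|I|=k-1}(U(B_I\cup\{b_i\})-U(B_I))$. Distributional Shapley value: $\nu(z;U,\mathcal{D},m)=\mathbb{E}_{B\sim\mathcal{D}^{m-1}}[\phi(z;U,B\cup\{z\})]$ with $B$ i.i.d. from $\mathcal{D}$. *)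

theory Defs
  imports "HOL-Probability.Probability"
begin

text \<open>Tuples in Z^* are lists; S \<union> {z} is S @ [z]. The product sigma-algebra on Z^n
  is PiM {..<n} (\<lambda>_. D).\<close>

definition potential :: "'z measure \<Rightarrow> ('z list \<Rightarrow> real) \<Rightarrow> bool" where
  "potential D U \<longleftrightarrow>
     (\<forall>xs\<in>lists (space D). 0 \<le> U xs \<and> U xs \<le> 1) \<and>
     (\<forall>xs ys. xs \<in> lists (space D) \<longrightarrow> mset xs = mset ys \<longrightarrow> U xs = U ys) \<and>
     (\<forall>n. (\<lambda>f. U (map f [0..<n])) \<in> borel_measurable (PiM {..<n} (\<lambda>_. D)))"

definition deletion_stable :: "'z measure \<Rightarrow> ('z list \<Rightarrow> real) \<Rightarrow> (nat \<Rightarrow> real) \<Rightarrow> bool" where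
  "deletion_stable D U \<beta> \<longleftrightarrow>
     (\<forall>k\<ge>1. \<forall>S\<in>lists (space D). \<forall>z\<in>space D.
        length S = k - 1 \<longrightarrow> \<bar>U (S @ [z]) - U S\<bar> \<le> \<beta> k)"

text \<open>Data Shapley value of entry number i (0-based) of B; B_I = nths B I.\<close>
definition data_shapley :: "('z list \<Rightarrow> real) \<Rightarrow> 'z list \<Rightarrow> nat \<Rightarrow> real" where
  "data_shapley U B i =
     (let m = length B in
      (1 / real m) * (\<Sum>k\<in>{1..m}. inverse (real ((m - 1) choose (k - 1))) *
         (\<Sum>I | I \<subseteq> {..<m} - {i} \<and> card I = k - 1. U (nths B I @ [B ! i]) - U (nths B I))))"

text \<open>Distributional Shapley value: B ~ D^(m-1), z appended as last entry.\<close>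
definition dist_shapley :: "('z list \<Rightarrow> real) \<Rightarrow> 'z measure \<Rightarrow> nat \<Rightarrow> 'z \<Rightarrow> real" where
  "dist_shapley U D m z =
     (\<integral>f. data_shapley U (map f [0..<m - 1] @ [z]) (m - 1) \<partial>(PiM {..<m - 1} (\<lambda>_. D)))"

text \<open>Index set of all i.i.d. coordinates: coordinate (k,t,j) is entry j of S_{k,t}.\<close>
definition sample_index :: "nat \<Rightarrow> (nat \<Rightarrow> nat) \<Rightarrow> (nat \<times> nat \<times> nat) set" where
  "sample_index m Tk = {(k, t, j). k \<in> {1..m} \<and> t < Tk k \<and> j < k - 1}"

definition sample_space :: "'z measure \<Rightarrow> nat \<Rightarrow> (nat \<Rightarrow> nat) \<Rightarrow> ((nat \<times> nat \<times> nat) \<Rightarrow> 'z) measure" where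
  "sample_space D m Tk = PiM (sample_index m Tk) (\<lambda>_. D)"

definition sample_S :: "((nat \<times> nat \<times> nat) \<Rightarrow> 'z) \<Rightarrow> nat \<Rightarrow> nat \<Rightarrow> 'z list" where
  "sample_S \<omega> k t = map (\<lambda>j. \<omega> (k, t, j)) [0..<k - 1]"

definition shapley_estimator ::
  "('z list \<Rightarrow> real) \<Rightarrow> nat \<Rightarrow> nat \<Rightarrow> (nat \<Rightarrow> nat) \<Rightarrow> (nat \<Rightarrow> real) \<Rightarrow> 'z
     \<Rightarrow> ((nat \<times> nat \<times> nat) \<Rightarrow> 'z) \<Rightarrow> real" where
  "shapley_estimator U m T Tk w z \<omega> =
     (1 / real T) * (\<Sum>k\<in>{1..m}. \<Sum>t<Tk k.
        (U (sample_S \<omega> k t @ [z]) - U (sample_S \<omega> k t)) / (w k * real m))"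

end

theory Submission
  imports Defs
begin

lemma reindex_integral:
  fixes F :: "(nat \<Rightarrow> 'z) \<Rightarrow> real" and e :: "nat \<Rightarrow> 'i"
  assumes D: "prob_space D" and inj: "inj_on e {..<n}" and eJ: "e ` {..<n} \<subseteq> J"
    and F: "F \<in> borel_measurable (PiM {..<n} (\<lambda>_. D))"
    and Floc: "\<And>g h. (\<And>j. j < n \<Longrightarrow> g j = h j) \<Longrightarrow> F g = F h"
  shows "(\<lambda>\<omega>. F (\<lambda>j. \<omega> (e j))) \<in> borel_measurable (PiM J (\<lambda>_. D))"
    "(\<integral>\<omega>. F (\<lambda>j. \<omega> (e j)) \<partial>PiM J (\<lambda>_. D)) = (\<integral>g. F g \<partial>PiM {..<n} (\<lambda>_. D))"
proof -
  let ?T = "\<lambda>\<omega>. \<lambda>j\<in>{..<n}. \<omega> (e j)"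
  have Tm: "?T \<in> measurable (PiM J (\<lambda>_. D)) (PiM {..<n} (\<lambda>_. D))"
    using eJ by (intro measurable_restrict) (auto intro!: measurable_component_singleton)
  have eq: "F (\<lambda>j. \<omega> (e j)) = F (?T \<omega>)" for \<omega>
    by (rule Floc) auto
  have "(\<lambda>\<omega>. F (?T \<omega>)) \<in> borel_measurable (PiM J (\<lambda>_. D))"
    using Tm F by measurable
  then show "(\<lambda>\<omega>. F (\<lambda>j. \<omega> (e j))) \<in> borel_measurable (PiM J (\<lambda>_. D))"
    by (simp add: eq)
  have "distr (PiM J (\<lambda>_. D)) (PiM {..<n} (\<lambda>_. D)) ?T = PiM {..<n} (\<lambda>_. D)"
    using distr_PiM_reindex[of J "\<lambda>_. D" e "{..<n}"] D inj eJ by auto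
  then have "(\<integral>g. F g \<partial>PiM {..<n} (\<lambda>_. D)) = (\<integral>g. F g \<partial>distr (PiM J (\<lambda>_. D)) (PiM {..<n} (\<lambda>_. D)) ?T)"
    by simp
  also have "\<dots> = (\<integral>\<omega>. F (?T \<omega>) \<partial>PiM J (\<lambda>_. D))"
    by (rule integral_distr[OF Tm F])
  finally show "(\<integral>\<omega>. F (\<lambda>j. \<omega> (e j)) \<partial>PiM J (\<lambda>_. D)) = (\<integral>g. F g \<partial>PiM {..<n} (\<lambda>_. D))"
    by (simp add: eq)
qed


lemma setL: assumes I: "I \<subseteq> {..<n}" shows "set (nths [0..<n] I) = I"
proof -
  have "set (nths [0..<n] I) = {[0..<n]!i | i. i < n \<and> i \<in> I}" by (simp add: set_nths)
  also have "\<dots> = (\<lambda>i. [0..<n]!i) ` {i. i < n \<and> i \<in> I}" by blast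
  also have "\<dots> = id ` {i. i < n \<and> i \<in> I}" by (intro image_cong) auto
  also have "\<dots> = I" using I by auto
  finally show ?thesis .
qed

lemma nths_reindex:
  fixes I :: "nat set"
  assumes I: "I \<subseteq> {..<n}"
  defines "e \<equiv> (\<lambda>j. nths [0..<n] I ! j)"
  shows "nths (map f [0..<n]) I = map (\<lambda>j. f (e j)) [0..<card I]"
    "inj_on e {..<card I}" "e ` {..<card I} \<subseteq> I"
proof -
  let ?L = "nths [0..<n] I"
  have setL: "set ?L = I" using setL[OF I] .
  have dL: "distinct ?L" by simp
  have lenL: "length ?L = card I" using distinct_card[OF dL] setL by simp
  have "nths (map f [0..<n]) I = map f ?L" by (simp add: nths_map)
  also have "\<dots> = map f (map (nth ?L) [0..<length ?L])" by (simp only: map_nth)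
  also have "\<dots> = map (\<lambda>j. f (e j)) [0..<card I]" by (simp add: lenL e_def)
  finally show "nths (map f [0..<n]) I = map (\<lambda>j. f (e j)) [0..<card I]" .
  show "inj_on e {..<card I}"
    unfolding inj_on_def e_def using dL lenL by (simp add: nth_eq_iff_index_eq)
  show "e ` {..<card I} \<subseteq> I"
  proof
    fix x assume "x \<in> e ` {..<card I}"
    then obtain j where "j < card I" "x = ?L ! j" by (auto simp: e_def)
    then show "x \<in> I" using setL lenL by (metis nth_mem)
  qed
qed

lemma potential_bound:
  assumes "potential D U" "xs \<in> lists (space D)"
  shows "0 \<le> U xs" "U xs \<le> 1"
proof -
  have "\<forall>xs\<in>lists (space D). 0 \<le> U xs \<and> U xs \<le> 1" using assms(1) unfolding potential_def by (elim conjE)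
  then show "0 \<le> U xs" "U xs \<le> 1" using assms(2) by blast+
qed

lemma potential_meas:
  assumes "potential D U"
  shows "(\<lambda>g. U (map g [0..<n])) \<in> borel_measurable (PiM {..<n} (\<lambda>_. D))"
proof -
  have "\<forall>n. (\<lambda>f. U (map f [0..<n])) \<in> borel_measurable (PiM {..<n} (\<lambda>_. D))"
    using assms unfolding potential_def by (elim conjE)
  then show ?thesis by blast
qed

lemma potential_meas_app:
  assumes U: "potential D U" and z: "z \<in> space D"
  shows "(\<lambda>g. U (map g [0..<n] @ [z])) \<in> borel_measurable (PiM {..<n} (\<lambda>_. D))"
proof -
  let ?T = "\<lambda>g. \<lambda>i\<in>{..<Suc n}. if i < n then g i else z"
  have Tm: "?T \<in> measurable (PiM {..<n} (\<lambda>_. D)) (PiM {..<Suc n} (\<lambda>_. D))"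
    using z apply (intro measurable_restrict)
    subgoal for i by (cases "i < n") auto
    done
  have "(\<lambda>g. U (map (?T g) [0..<Suc n])) \<in> borel_measurable (PiM {..<n} (\<lambda>_. D))"
    using measurable_comp[OF Tm potential_meas[OF U, of "Suc n"]] by (simp add: comp_def)
  moreover have "(\<lambda>g. U (map (?T g) [0..<Suc n])) = (\<lambda>g. U (map g [0..<n] @ [z]))"
  proof (intro ext)
    fix g
    have "map (?T g) [0..<Suc n] = map g [0..<n] @ [z]" by (simp add: map_eq_conv)
    then show "U (map (?T g) [0..<Suc n]) = U (map g [0..<n] @ [z])" by (simp only:)
  qed
  ultimately show ?thesis by simp
qed

definition Vf :: "('z list \<Rightarrow> real) \<Rightarrow> 'z \<Rightarrow> nat \<Rightarrow> (nat \<Rightarrow> 'z) \<Rightarrow> real" where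
  "Vf U z n g = U (map g [0..<n] @ [z]) - U (map g [0..<n])"

definition Ek :: "('z list \<Rightarrow> real) \<Rightarrow> 'z measure \<Rightarrow> 'z \<Rightarrow> nat \<Rightarrow> real" where
  "Ek U D z n = (\<integral>g. Vf U z n g \<partial>PiM {..<n} (\<lambda>_. D))"

lemma Vf_meas:
  assumes U: "potential D U" and z: "z \<in> space D"
  shows "Vf U z n \<in> borel_measurable (PiM {..<n} (\<lambda>_. D))"
  unfolding Vf_def by (rule borel_measurable_diff[OF potential_meas_app[OF U z] potential_meas[OF U]])

lemma Vf_loc:
  assumes "\<And>j. j < n \<Longrightarrow> g j = h j"
  shows "Vf U z n g = Vf U z n h"
proof -
  have "map g [0..<n] = map h [0..<n]" using assms by (simp add: map_eq_conv)
  then show ?thesis by (simp only: Vf_def)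
qed

lemma Vf_bound1:
  assumes U: "potential D U" and z: "z \<in> space D" and g: "\<And>j. j < n \<Longrightarrow> g j \<in> space D"
  shows "\<bar>Vf U z n g\<bar> \<le> 1"
proof -
  have l: "map g [0..<n] \<in> lists (space D)" using g by auto
  have l2: "map g [0..<n] @ [z] \<in> lists (space D)" using g z by auto
  show ?thesis using potential_bound[OF U l] potential_bound[OF U l2] unfolding Vf_def abs_le_iff by linarith
qed

lemma Vf_bound_beta:
  assumes st: "deletion_stable D U \<beta>" and z: "z \<in> space D" and g: "\<And>j. j < n \<Longrightarrow> g j \<in> space D"
  shows "\<bar>Vf U z n g\<bar> \<le> \<beta> (Suc n)"
proof -
  have l: "map g [0..<n] \<in> lists (space D)" using g by auto
  have H: "\<forall>k\<ge>1. \<forall>S\<in>lists (space D). \<forall>z\<in>space D.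
        length S = k - 1 \<longrightarrow> \<bar>U (S @ [z]) - U S\<bar> \<le> \<beta> k"
    using st unfolding deletion_stable_def by blast
  have "\<bar>U (map g [0..<n] @ [z]) - U (map g [0..<n])\<bar> \<le> \<beta> (Suc n)"
  proof -
    have len: "length (map g [0..<n]) = Suc n - 1" by simp
    have "Suc n \<ge> 1" by simp
    show ?thesis by (rule H[rule_format, OF \<open>Suc n \<ge> 1\<close> l z len])
  qed
  then show ?thesis by (simp only: Vf_def)
qed

lemma block:
  assumes D: "prob_space D" and U: "potential D U" and z: "z \<in> space D"
    and inj: "inj_on e {..<n}" and eJ: "e ` {..<n} \<subseteq> J"
  shows "(\<lambda>\<omega>. Vf U z n (\<lambda>j. \<omega> (e j))) \<in> borel_measurable (PiM J (\<lambda>_. D))"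
    "integrable (PiM J (\<lambda>_. D)) (\<lambda>\<omega>. Vf U z n (\<lambda>j. \<omega> (e j)))"
    "(\<integral>\<omega>. Vf U z n (\<lambda>j. \<omega> (e j)) \<partial>PiM J (\<lambda>_. D)) = Ek U D z n"
proof -
  show m: "(\<lambda>\<omega>. Vf U z n (\<lambda>j. \<omega> (e j))) \<in> borel_measurable (PiM J (\<lambda>_. D))"
    by (rule reindex_integral(1)[OF D inj eJ Vf_meas[OF U z]]) (rule Vf_loc, auto)
  show "(\<integral>\<omega>. Vf U z n (\<lambda>j. \<omega> (e j)) \<partial>PiM J (\<lambda>_. D)) = Ek U D z n"
    unfolding Ek_def
    by (rule reindex_integral(2)[OF D inj eJ Vf_meas[OF U z]]) (rule Vf_loc, auto)
  interpret P: prob_space "PiM J (\<lambda>_. D)" using D by (intro prob_space_PiM) auto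
  show "integrable (PiM J (\<lambda>_. D)) (\<lambda>\<omega>. Vf U z n (\<lambda>j. \<omega> (e j)))"
  proof (rule P.integrable_const_bound[where B=1, OF AE_I2 m])
    fix \<omega> assume "\<omega> \<in> space (PiM J (\<lambda>_. D))"
    then have w: "\<omega> \<in> (\<Pi>\<^sub>E i\<in>J. space D)" by (simp add: space_PiM)
    have "\<omega> (e j) \<in> space D" if "j < n" for j
    proof -
      have "e j \<in> J" using eJ that by blast
      then show ?thesis using w by (rule PiE_mem[rotated])
    qed
    then have "\<bar>Vf U z n (\<lambda>j. \<omega> (e j))\<bar> \<le> 1" by (rule Vf_bound1[OF U z])
    then show "norm (Vf U z n (\<lambda>j. \<omega> (e j))) \<le> 1" by simp
  qed
qed

lemma est_alt:
  "shapley_estimator U m T Tk w z \<omega> =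
     1 / real T * (\<Sum>k\<in>{1..m}. \<Sum>t<Tk k. Vf U z (k - 1) (\<lambda>j. \<omega> (k, t, j)) / (w k * real m))"
  by (simp only: shapley_estimator_def sample_S_def Vf_def)

lemma sample_block:
  assumes D: "prob_space D" and U: "potential D U" and z: "z \<in> space D"
    and k: "k \<in> {1..m}" and t: "t < Tk k"
  shows "integrable (sample_space D m Tk) (\<lambda>\<omega>. Vf U z (k - 1) (\<lambda>j. \<omega> (k, t, j)))"
    "(\<integral>\<omega>. Vf U z (k - 1) (\<lambda>j. \<omega> (k, t, j)) \<partial>sample_space D m Tk) = Ek U D z (k - 1)"
proof -
  have inj: "inj_on (\<lambda>j. (k, t, j)) {..<k - 1}" by (auto simp: inj_on_def)
  have eJ: "(\<lambda>j. (k, t, j)) ` {..<k - 1} \<subseteq> sample_index m Tk"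
    using k t by (auto simp: sample_index_def)
  show "integrable (sample_space D m Tk) (\<lambda>\<omega>. Vf U z (k - 1) (\<lambda>j. \<omega> (k, t, j)))"
    unfolding sample_space_def by (rule block(2)[OF D U z inj eJ])
  show "(\<integral>\<omega>. Vf U z (k - 1) (\<lambda>j. \<omega> (k, t, j)) \<partial>sample_space D m Tk) = Ek U D z (k - 1)"
    unfolding sample_space_def by (rule block(3)[OF D U z inj eJ])
qed

lemma est_integral:
  assumes D: "prob_space D" and U: "potential D U" and z: "z \<in> space D"
  shows "(\<integral>\<omega>. shapley_estimator U m T Tk w z \<omega> \<partial>sample_space D m Tk) =
     1 / real T * (\<Sum>k\<in>{1..m}. real (Tk k) * Ek U D z (k - 1) / (w k * real m))"
proof -
  let ?M = "sample_space D m Tk"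
  let ?f = "\<lambda>k t \<omega>. Vf U z (k - 1) (\<lambda>j. \<omega> (k, t, j)) / (w k * real m)"
  have i1: "integrable ?M (?f k t)" if "k \<in> {1..m}" "t < Tk k" for k t
    using sample_block(1)[where Tk=Tk and k=k and t=t and m=m, OF D U z that] by simp
  have e1: "(\<integral>\<omega>. ?f k t \<omega> \<partial>?M) = Ek U D z (k - 1) / (w k * real m)" if "k \<in> {1..m}" "t < Tk k" for k t
    using sample_block(2)[where Tk=Tk and k=k and t=t and m=m, OF D U z that] by simp
  have i2: "integrable ?M (\<lambda>\<omega>. \<Sum>t<Tk k. ?f k t \<omega>)" if "k \<in> {1..m}" for k
    using i1 that by (intro Bochner_Integration.integrable_sum) auto
  have e2: "(\<integral>\<omega>. (\<Sum>t<Tk k. ?f k t \<omega>) \<partial>?M) = real (Tk k) * Ek U D z (k - 1) / (w k * real m)"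
    if "k \<in> {1..m}" for k
  proof -
    have "(\<integral>\<omega>. (\<Sum>t<Tk k. ?f k t \<omega>) \<partial>?M) = (\<Sum>t<Tk k. (\<integral>\<omega>. ?f k t \<omega> \<partial>?M))"
      using i1 that by (intro Bochner_Integration.integral_sum) auto
    also have "\<dots> = (\<Sum>t<Tk k. Ek U D z (k - 1) / (w k * real m))"
      using e1 that by (intro sum.cong) auto
    finally show ?thesis by simp
  qed
  have "(\<integral>\<omega>. shapley_estimator U m T Tk w z \<omega> \<partial>?M) =
     (\<integral>\<omega>. 1 / real T * (\<Sum>k\<in>{1..m}. \<Sum>t<Tk k. ?f k t \<omega>) \<partial>?M)"
    by (simp only: est_alt)
  also have "\<dots> = 1 / real T * (\<integral>\<omega>. (\<Sum>k\<in>{1..m}. \<Sum>t<Tk k. ?f k t \<omega>) \<partial>?M)"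
    by (rule integral_mult_right_zero)
  also have "(\<integral>\<omega>. (\<Sum>k\<in>{1..m}. \<Sum>t<Tk k. ?f k t \<omega>) \<partial>?M) =
      (\<Sum>k\<in>{1..m}. (\<integral>\<omega>. (\<Sum>t<Tk k. ?f k t \<omega>) \<partial>?M))"
    using i2 by (intro Bochner_Integration.integral_sum) auto
  also have "\<dots> = (\<Sum>k\<in>{1..m}. real (Tk k) * Ek U D z (k - 1) / (w k * real m))"
    using e2 by (intro sum.cong) auto
  finally show ?thesis .
qed

lemma nths_B:
  assumes I: "I \<subseteq> {..<n}"
  shows "nths (map f [0..<n] @ [z]) I = nths (map f [0..<n]) I"
proof -
  have "0 \<notin> {j. j + length (map f [0..<n]) \<in> I}" using I by auto
  then show ?thesis by (simp add: nths_append)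
qed

lemma dist_eq:
  assumes D: "prob_space D" and U: "potential D U" and z: "z \<in> space D" and m: "m \<ge> 1"
  shows "dist_shapley U D m z = 1 / real m * (\<Sum>k\<in>{1..m}. Ek U D z (k - 1))"
proof -
  define n where "n = m - 1"
  have mn: "m = Suc n" using m by (simp add: n_def)
  define S where "S = (\<lambda>k::nat. {I. I \<subseteq> {..<n} \<and> card I = k - 1})"
  define e where "e = (\<lambda>I j. nths [0..<n] I ! j)"
  let ?M = "PiM {..<n} (\<lambda>_. D)"
  have S_eq: "{I. I \<subseteq> {..<m} - {n} \<and> card I = k - 1} = S k" for k
  proof -
    have "{..<m} - {n} = {..<n}" using mn by auto
    then show ?thesis by (simp add: S_def)
  qed
  have finS: "finite (S k)" for k
    by (rule finite_subset[of _ "Pow {..<n}"]) (auto simp: S_def)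
  have cardS: "card (S k) = n choose (k - 1)" for k
    using n_subsets[of "{..<n}" "k - 1"] by (simp add: S_def)
  have summand: "U (nths (map f [0..<n] @ [z]) I @ [(map f [0..<n] @ [z]) ! n]) - U (nths (map f [0..<n] @ [z]) I)
      = Vf U z (k - 1) (\<lambda>j. f (e I j))" if "I \<in> S k" for f I k
  proof -
    have I: "I \<subseteq> {..<n}" and cI: "card I = k - 1" using that by (auto simp: S_def)
    have "nths (map f [0..<n] @ [z]) I = nths (map f [0..<n]) I" by (rule nths_B[OF I])
    also have "\<dots> = map (\<lambda>j. f (e I j)) [0..<card I]" unfolding e_def by (rule nths_reindex(1)[OF I])
    finally have "nths (map f [0..<n] @ [z]) I = map (\<lambda>j. f (e I j)) [0..<k - 1]" using cI by simp
    moreover have "(map f [0..<n] @ [z]) ! n = z" by (simp add: nth_append)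
    ultimately show ?thesis by (simp add: Vf_def)
  qed
  have ds: "data_shapley U (map f [0..<n] @ [z]) n =
      1 / real m * (\<Sum>k\<in>{1..m}. inverse (real (n choose (k - 1))) *
         (\<Sum>I\<in>S k. Vf U z (k - 1) (\<lambda>j. f (e I j))))" for f
  proof -
    have len: "length (map f [0..<n] @ [z]) = m" using mn by simp
    show ?thesis
      unfolding data_shapley_def Let_def len S_eq
      using summand mn by (intro arg_cong2[where f="(*)"] refl sum.cong arg_cong2[where f="(*)"]) auto
  qed
  have blk: "integrable ?M (\<lambda>f. Vf U z (k - 1) (\<lambda>j. f (e I j)))"
    "(\<integral>f. Vf U z (k - 1) (\<lambda>j. f (e I j)) \<partial>?M) = Ek U D z (k - 1)" if "I \<in> S k" for I k
  proof -
    have I: "I \<subseteq> {..<n}" and cI: "card I = k - 1" using that by (auto simp: S_def)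
    have inj: "inj_on (e I) {..<k - 1}" and eJ: "e I ` {..<k - 1} \<subseteq> {..<n}"
      using nths_reindex(2,3)[OF I] cI I unfolding e_def by auto
    show "integrable ?M (\<lambda>f. Vf U z (k - 1) (\<lambda>j. f (e I j)))" by (rule block(2)[OF D U z inj eJ])
    show "(\<integral>f. Vf U z (k - 1) (\<lambda>j. f (e I j)) \<partial>?M) = Ek U D z (k - 1)" by (rule block(3)[OF D U z inj eJ])
  qed
  have "dist_shapley U D m z = (\<integral>f. data_shapley U (map f [0..<n] @ [z]) n \<partial>?M)"
    by (simp add: dist_shapley_def n_def)
  also have "\<dots> = (\<integral>f. 1 / real m * (\<Sum>k\<in>{1..m}. inverse (real (n choose (k - 1))) *
         (\<Sum>I\<in>S k. Vf U z (k - 1) (\<lambda>j. f (e I j)))) \<partial>?M)"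
    by (simp only: ds)
  also have "\<dots> = 1 / real m * (\<Sum>k\<in>{1..m}. inverse (real (n choose (k - 1))) *
         (\<Sum>I\<in>S k. (\<integral>f. Vf U z (k - 1) (\<lambda>j. f (e I j)) \<partial>?M)))"
  proof -
    have "(\<integral>f. (\<Sum>k\<in>{1..m}. inverse (real (n choose (k - 1))) *
         (\<Sum>I\<in>S k. Vf U z (k - 1) (\<lambda>j. f (e I j)))) \<partial>?M) =
        (\<Sum>k\<in>{1..m}. (\<integral>f. inverse (real (n choose (k - 1))) *
         (\<Sum>I\<in>S k. Vf U z (k - 1) (\<lambda>j. f (e I j))) \<partial>?M))"
      using blk(1) by (intro Bochner_Integration.integral_sum integrable_mult_right Bochner_Integration.integrable_sum) auto
    also have "\<dots> = (\<Sum>k\<in>{1..m}. inverse (real (n choose (k - 1))) *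
         (\<Sum>I\<in>S k. (\<integral>f. Vf U z (k - 1) (\<lambda>j. f (e I j)) \<partial>?M)))"
      using blk(1) by (intro sum.cong refl, subst integral_mult_right_zero, subst Bochner_Integration.integral_sum) auto
    finally show ?thesis by simp
  qed
  also have "\<dots> = 1 / real m * (\<Sum>k\<in>{1..m}. Ek U D z (k - 1))"
  proof -
    have "inverse (real (n choose (k - 1))) * (\<Sum>I\<in>S k. (\<integral>f. Vf U z (k - 1) (\<lambda>j. f (e I j)) \<partial>?M))
        = Ek U D z (k - 1)" if "k \<in> {1..m}" for k
    proof -
      have "(\<Sum>I\<in>S k. (\<integral>f. Vf U z (k - 1) (\<lambda>j. f (e I j)) \<partial>?M)) = (\<Sum>I\<in>S k. Ek U D z (k - 1))"
        using blk(2) by (intro sum.cong) auto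
      also have "\<dots> = real (n choose (k - 1)) * Ek U D z (k - 1)" by (simp add: cardS)
      finally have eq: "(\<Sum>I\<in>S k. (\<integral>f. Vf U z (k - 1) (\<lambda>j. f (e I j)) \<partial>?M)) = real (n choose (k - 1)) * Ek U D z (k - 1)" .
      have "k - 1 \<le> n" using that mn by auto
      then have "real (n choose (k - 1)) \<noteq> 0" by simp
      then show ?thesis unfolding eq by simp
    qed
    then show ?thesis by (intro arg_cong2[where f="(*)"] refl sum.cong) auto
  qed
  finally show ?thesis .
qed

lemma indep_coords:
  assumes D: "prob_space D"
  shows "prob_space.indep_vars (PiM J (\<lambda>_. D)) (\<lambda>_. D) (\<lambda>i \<omega>. \<omega> i) J"
proof -
  interpret P: prob_space "PiM J (\<lambda>_. D)" using D by (intro prob_space_PiM) auto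
  show ?thesis
  proof (cases "J = {}")
    case True
    have "P.indep_vars (\<lambda>_. D) (\<lambda>i \<omega>. \<omega> i) {}" by (simp add: P.indep_vars_def P.indep_sets_def)
    then show ?thesis by (simp only: True)
  next
    case False
    have rv: "(\<lambda>\<omega>. \<omega> i) \<in> measurable (PiM J (\<lambda>_. D)) D" if "i \<in> J" for i
      using measurable_component_singleton[OF that, of "\<lambda>_. D"] by simp
    have "distr (PiM J (\<lambda>_. D)) (PiM J (\<lambda>_. D)) (\<lambda>x. \<lambda>i\<in>J. x i) = distr (PiM J (\<lambda>_. D)) (PiM J (\<lambda>_. D)) (\<lambda>x. x)"
      by (rule distr_cong) (auto simp: space_PiM)
    also have "\<dots> = PiM J (\<lambda>_. D)" by simp
    also have "\<dots> = PiM J (\<lambda>i. distr (PiM J (\<lambda>_. D)) D (\<lambda>\<omega>. \<omega> i))"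
    proof (intro PiM_cong refl)
      fix i assume "i \<in> J"
      then show "D = distr (PiM J (\<lambda>_. D)) D (\<lambda>\<omega>. \<omega> i)"
        using distr_PiM_component[of J "\<lambda>_. D" i] D by simp
    qed
    finally show ?thesis
      using P.indep_vars_iff_distr_eq_PiM'[OF False rv] by simp
  qed
qed


lemma indep_blocks:
  fixes K :: "'p \<Rightarrow> 'i set" and X :: "'p \<Rightarrow> ('i \<Rightarrow> 'z) \<Rightarrow> real"
  assumes D: "prob_space D" and K: "\<And>p. p \<in> Idx \<Longrightarrow> K p \<subseteq> J" and disj: "disjoint_family_on K Idx"
    and Y: "\<And>p. p \<in> Idx \<Longrightarrow> Y p \<in> borel_measurable (PiM (K p) (\<lambda>_. D))"
    and XY: "\<And>p \<omega>. p \<in> Idx \<Longrightarrow> X p \<omega> = Y p (restrict \<omega> (K p))"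
  shows "prob_space.indep_vars (PiM J (\<lambda>_. D)) (\<lambda>_. borel) X Idx"
proof -
  interpret P: prob_space "PiM J (\<lambda>_. D)" using D by (intro prob_space_PiM) auto
  have "P.indep_vars (\<lambda>p. PiM (K p) (\<lambda>_. D)) (\<lambda>p \<omega>. restrict (\<lambda>i. \<omega> i) (K p)) Idx"
    by (rule P.indep_vars_restrict[OF indep_coords[OF D] K disj])
  then have "P.indep_vars (\<lambda>_. borel) (\<lambda>p \<omega>. Y p (restrict (\<lambda>i. \<omega> i) (K p))) Idx"
    by (rule P.indep_vars_compose2) (rule Y)
  moreover have "P.indep_vars (\<lambda>_. borel) (\<lambda>p \<omega>. Y p (restrict (\<lambda>i. \<omega> i) (K p))) Idx
      \<longleftrightarrow> P.indep_vars (\<lambda>_. borel) X Idx"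
    by (rule P.indep_vars_cong) (auto simp: XY)
  ultimately show ?thesis by simp
qed

lemma mean_eq:
  assumes D: "prob_space D" and U: "potential D U" and z: "z \<in> space D" and m: "m \<ge> 1"
    and w_pos: "\<And>k. k \<in> {1..m} \<Longrightarrow> w k > 0" and T_pos: "T > 0"
    and Tk: "\<And>k. k \<in> {1..m} \<Longrightarrow> real (Tk k) = w k * real T"
  shows "(\<integral>\<omega>. shapley_estimator U m T Tk w z \<omega> \<partial>sample_space D m Tk) = dist_shapley U D m z"
proof -
  have "1 / real T * (\<Sum>k\<in>{1..m}. real (Tk k) * Ek U D z (k - 1) / (w k * real m))
      = (\<Sum>k\<in>{1..m}. 1 / real T * (real (Tk k) * Ek U D z (k - 1) / (w k * real m)))"
    by (rule sum_distrib_left)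
  also have "\<dots> = (\<Sum>k\<in>{1..m}. 1 / real m * Ek U D z (k - 1))"
  proof (rule sum.cong[OF refl])
    fix k assume k: "k \<in> {1..m}"
    have "w k > 0" using w_pos k by simp
    then show "1 / real T * (real (Tk k) * Ek U D z (k - 1) / (w k * real m)) = 1 / real m * Ek U D z (k - 1)"
      unfolding Tk[OF k] using T_pos by (simp add: field_simps)
  qed
  also have "\<dots> = 1 / real m * (\<Sum>k\<in>{1..m}. Ek U D z (k - 1))"
    by (rule sum_distrib_left[symmetric])
  finally show ?thesis using est_integral[OF D U z] dist_eq[OF D U z m] by simp
qed

lemma hoeff_z:
  fixes \<beta> :: "nat \<Rightarrow> real" and z :: 'z
  assumes D: "prob_space D" and U: "potential D U" and stable: "deletion_stable D U \<beta>"
    and z: "z \<in> space D" and m: "m \<ge> 1"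
    and w_pos: "\<And>k. k \<in> {1..m} \<Longrightarrow> w k > 0" and T_pos: "T > 0"
    and Tk: "\<And>k. k \<in> {1..m} \<Longrightarrow> real (Tk k) = w k * real T"
    and \<epsilon>: "\<epsilon> > 0" and N: "N > 0" and \<delta>: "\<delta> > 0"
    and \<beta>_nonneg: "\<And>k. 0 \<le> \<beta> k"
    and Tb: "real T \<ge> 2 * ln (2 * N / \<delta>) / (\<epsilon>\<^sup>2 * (real m)\<^sup>2) * (\<Sum>k\<in>{1..m}. (\<beta> k)\<^sup>2 / w k)"
  shows "{\<omega> \<in> space (sample_space D m Tk). \<not> \<bar>shapley_estimator U m T Tk w z \<omega> - dist_shapley U D m z\<bar> \<le> \<epsilon>}
           \<in> sets (sample_space D m Tk)"
    "measure (sample_space D m Tk)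
       {\<omega> \<in> space (sample_space D m Tk). \<not> \<bar>shapley_estimator U m T Tk w z \<omega> - dist_shapley U D m z\<bar> \<le> \<epsilon>}
       \<le> \<delta> / N"
proof -
  define M where "M = sample_space D m Tk"
  define J where "J = sample_index m Tk"
  have MJ: "M = PiM J (\<lambda>_. D)" by (simp add: M_def J_def sample_space_def)
  interpret P: prob_space M unfolding MJ using D by (intro prob_space_PiM) auto
  define Idx where "Idx = Sigma {1..m} (\<lambda>k. {..<Tk k})"
  define X :: "nat \<times> nat \<Rightarrow> (nat \<times> nat \<times> nat \<Rightarrow> 'z) \<Rightarrow> real" where "X = (\<lambda>p \<omega>. 1 / real T * (Vf U z (fst p - 1) (\<lambda>j. \<omega> (fst p, snd p, j)) / (w (fst p) * real m)))"
  define c where "c = (\<lambda>k. 1 / real T * (\<beta> k / (w k * real m)))"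
  define S where "S = (\<Sum>k\<in>{1..m}. (\<beta> k)\<^sup>2 / w k)"
  define est where "est = shapley_estimator U m T Tk w z"
  define d where "d = dist_shapley U D m z"
  have finIdx: "finite Idx" by (simp add: Idx_def)
  have Xint: "integrable M (X p)" if pI: "p \<in> Idx" for p
  proof -
    obtain k t where p: "p = (k, t)" and k: "k \<in> {1..m}" and t: "t < Tk k"
      using pI by (auto simp: Idx_def)
    show ?thesis unfolding p X_def M_def
      using sample_block(1)[where Tk=Tk and k=k and t=t and m=m, OF D U z k t] by simp
  qed
  have Xmeas: "X p \<in> borel_measurable M" if "p \<in> Idx" for p
    using Xint[OF that] by (rule borel_measurable_integrable)
  have sumX: "est \<omega> = (\<Sum>p\<in>Idx. X p \<omega>)" for \<omega>
  proof -
    have "est \<omega> = 1 / real T * (\<Sum>k\<in>{1..m}. \<Sum>t<Tk k. Vf U z (k - 1) (\<lambda>j. \<omega> (k, t, j)) / (w k * real m))"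
      unfolding est_def by (rule est_alt)
    also have "\<dots> = (\<Sum>k\<in>{1..m}. \<Sum>t<Tk k. X (k, t) \<omega>)"
      unfolding X_def by (simp add: sum_distrib_left)
    also have "\<dots> = (\<Sum>p\<in>Idx. X p \<omega>)"
      unfolding Idx_def by (subst sum.Sigma) (auto simp: split_beta)
    finally show ?thesis .
  qed
  have mu: "(\<Sum>p\<in>Idx. P.expectation (X p)) = d"
  proof -
    have "(\<Sum>p\<in>Idx. P.expectation (X p)) = (\<integral>\<omega>. (\<Sum>p\<in>Idx. X p \<omega>) \<partial>M)"
      using Xint by (intro Bochner_Integration.integral_sum[symmetric]) auto
    also have "\<dots> = (\<integral>\<omega>. est \<omega> \<partial>M)" by (simp add: sumX)
    also have "\<dots> = d" unfolding est_def d_def M_def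
      by (rule mean_eq[OF D U z m w_pos T_pos Tk])
    finally show ?thesis .
  qed
  have inJ: "(k, t, j) \<in> J" if "(k, t) \<in> Idx" "j < k - 1" for k t j
    using that by (auto simp: J_def Idx_def sample_index_def)
  have bound: "\<bar>X p \<omega>\<bar> \<le> c (fst p)" if p: "p \<in> Idx" and \<omega>: "\<omega> \<in> space M" for p \<omega>
  proof -
    obtain k t where pk: "p = (k, t)" and k: "k \<in> {1..m}" and t: "t < Tk k"
      using p by (auto simp: Idx_def)
    have w: "\<omega> \<in> (\<Pi>\<^sub>E i\<in>J. space D)" using \<omega> by (simp add: MJ space_PiM)
    have "\<omega> (k, t, j) \<in> space D" if "j < k - 1" for j
      using inJ[OF p[unfolded pk] that] w by (rule PiE_mem[rotated])
    then have V: "\<bar>Vf U z (k - 1) (\<lambda>j. \<omega> (k, t, j))\<bar> \<le> \<beta> (Suc (k - 1))"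
      by (rule Vf_bound_beta[OF stable z])
    have Sk: "Suc (k - 1) = k" using k by auto
    have wk: "w k > 0" using w_pos k by simp
    have pos: "real T * (w k * real m) > 0" using wk T_pos m by simp
    have "\<bar>X p \<omega>\<bar> = \<bar>Vf U z (k - 1) (\<lambda>j. \<omega> (k, t, j))\<bar> / (real T * (w k * real m))"
      unfolding X_def pk using pos wk by (simp add: abs_mult abs_divide)
    also have "\<dots> \<le> \<beta> k / (real T * (w k * real m))"
      using V Sk pos by (simp add: divide_right_mono)
    also have "\<dots> = c (fst p)" unfolding c_def pk by simp
    finally show ?thesis .
  qed
  have estm: "est \<in> borel_measurable M"
  proof -
    have "(\<lambda>\<omega>. \<Sum>p\<in>Idx. X p \<omega>) \<in> borel_measurable M"
      using Xmeas by (rule borel_measurable_sum)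
    then show ?thesis by (simp add: sumX[abs_def])
  qed
  have badsets: "{\<omega> \<in> space M. \<not> \<bar>est \<omega> - d\<bar> \<le> \<epsilon>} \<in> sets M"
    using estm by measurable
  then show "{\<omega> \<in> space (sample_space D m Tk). \<not> \<bar>shapley_estimator U m T Tk w z \<omega> - dist_shapley U D m z\<bar> \<le> \<epsilon>}
           \<in> sets (sample_space D m Tk)" by (simp add: M_def est_def d_def)
  have Sge: "S \<ge> 0" unfolding S_def using w_pos by (intro sum_nonneg) (auto intro: divide_nonneg_pos)
  have Q: "(\<Sum>p\<in>Idx. (c (fst p) - - c (fst p))\<^sup>2) = 4 * S / (real T * (real m)\<^sup>2)"
  proof -
    have "(\<Sum>p\<in>Idx. (c (fst p) - - c (fst p))\<^sup>2) = (\<Sum>k\<in>{1..m}. \<Sum>t<Tk k. (c k - - c k)\<^sup>2)"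
      unfolding Idx_def by (subst sum.Sigma) (auto simp: split_beta)
    also have "\<dots> = (\<Sum>k\<in>{1..m}. 4 / (real T * (real m)\<^sup>2) * ((\<beta> k)\<^sup>2 / w k))"
    proof (rule sum.cong[OF refl])
      fix k assume k: "k \<in> {1..m}"
      have wk: "w k > 0" using w_pos k by simp
      have "(\<Sum>t<Tk k. (c k - - c k)\<^sup>2) = real (Tk k) * (c k - - c k)\<^sup>2" by simp
      also have "\<dots> = w k * real T * (2 * (1 / real T * (\<beta> k / (w k * real m))))\<^sup>2"
        unfolding Tk[OF k] c_def by (simp add: ac_simps)
      also have "\<dots> = 4 / (real T * (real m)\<^sup>2) * ((\<beta> k)\<^sup>2 / w k)"
        using wk T_pos m by (simp add: field_simps power2_eq_square)
      finally show "(\<Sum>t<Tk k. (c k - - c k)\<^sup>2) = 4 / (real T * (real m)\<^sup>2) * ((\<beta> k)\<^sup>2 / w k)" .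
    qed
    also have "\<dots> = 4 / (real T * (real m)\<^sup>2) * S" unfolding S_def by (rule sum_distrib_left[symmetric])
    finally show ?thesis by simp
  qed
  have "measure M {\<omega> \<in> space M. \<not> \<bar>est \<omega> - d\<bar> \<le> \<epsilon>} \<le> \<delta> / N"
  proof (cases "S = 0")
    case True
    have \<beta>0: "\<beta> k = 0" if k: "k \<in> {1..m}" for k
    proof -
      have "\<forall>k\<in>{1..m}. (\<beta> k)\<^sup>2 / w k = 0"
      proof -
        have nn: "0 \<le> (\<beta> k)\<^sup>2 / w k" if "k \<in> {1..m}" for k
        proof -
          have "w k > 0" using that by (rule w_pos)
          then show ?thesis by simp
        qed
        have "(\<Sum>k = 1..m. (\<beta> k)\<^sup>2 / w k) = 0" using True unfolding S_def .
        then show ?thesis using sum_nonneg_eq_0_iff[of "{1..m}" "\<lambda>k. (\<beta> k)\<^sup>2 / w k"] nn by simp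
      qed
      then have "(\<beta> k)\<^sup>2 / w k = 0" using k by blast
      moreover have "w k > 0" using w_pos k by simp
      ultimately show ?thesis by simp
    qed
    have X0: "X p \<omega> = 0" if "p \<in> Idx" "\<omega> \<in> space M" for p \<omega>
    proof -
      have "fst p \<in> {1..m}" using that(1) by (auto simp: Idx_def)
      then have "c (fst p) = 0" using \<beta>0 by (simp add: c_def)
      then show ?thesis using bound[OF that] by simp
    qed
    have "P.expectation (X p) = 0" if "p \<in> Idx" for p
    proof -
      have "P.expectation (X p) = P.expectation (\<lambda>_. 0::real)"
        by (rule Bochner_Integration.integral_cong[OF refl]) (rule X0[OF that])
      then show ?thesis by simp
    qed
    then have d0: "d = 0" using mu by simp
    have E: "{\<omega> \<in> space M. \<not> \<bar>est \<omega> - d\<bar> \<le> \<epsilon>} = {}"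
      using X0 \<epsilon> by (auto simp: sumX d0)
    show ?thesis unfolding E using \<delta> N by simp
  next
    case False
    then have Spos: "S > 0" using Sge by simp
    have Qpos: "(\<Sum>p\<in>Idx. (c (fst p) - - c (fst p))\<^sup>2) > 0"
      unfolding Q using Spos T_pos m by simp
    define K where "K = (\<lambda>p::nat\<times>nat. (\<lambda>j. (fst p, snd p, j)) ` {..<fst p - 1})"
    define Y :: "nat \<times> nat \<Rightarrow> (nat \<times> nat \<times> nat \<Rightarrow> 'z) \<Rightarrow> real" where "Y = (\<lambda>p g. 1 / real T * (Vf U z (fst p - 1) (\<lambda>j. g (fst p, snd p, j)) / (w (fst p) * real m)))"
    have indep: "P.indep_vars (\<lambda>_. borel) X Idx"
      unfolding MJ
    proof (rule indep_blocks[OF D])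
      fix p assume p: "p \<in> Idx"
      show "K p \<subseteq> J" using inJ p by (cases p) (auto simp: K_def)
      have inj: "inj_on (\<lambda>j. (fst p, snd p, j)) {..<fst p - 1}" by (auto simp: inj_on_def)
      have "(\<lambda>g. Vf U z (fst p - 1) (\<lambda>j. g (fst p, snd p, j))) \<in> borel_measurable (PiM (K p) (\<lambda>_. D))"
        by (rule reindex_integral(1)[OF D inj _ Vf_meas[OF U z]]) (auto simp: K_def intro: Vf_loc)
      then show "Y p \<in> borel_measurable (PiM (K p) (\<lambda>_. D))"
        unfolding Y_def by (intro borel_measurable_times borel_measurable_const borel_measurable_divide)
      fix \<omega>
      have "Vf U z (fst p - 1) (\<lambda>j. \<omega> (fst p, snd p, j)) = Vf U z (fst p - 1) (\<lambda>j. restrict \<omega> (K p) (fst p, snd p, j))"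
        by (rule Vf_loc) (simp add: K_def)
      then show "X p \<omega> = Y p (restrict \<omega> (K p))" by (simp add: X_def Y_def)
    next
      show "disjoint_family_on K Idx" by (auto simp: disjoint_family_on_def K_def)
    qed
    interpret H: Hoeffding_ineq M Idx X "\<lambda>p. - c (fst p)" "\<lambda>p. c (fst p)" "\<Sum>p\<in>Idx. P.expectation (X p)"
    proof unfold_locales
      show "finite Idx" by (rule finIdx)
      show "P.indep_vars (\<lambda>_. borel) X Idx" by (rule indep)
      fix p assume p: "p \<in> Idx"
      show "AE x in M. X p x \<in> {- c (fst p)..c (fst p)}"
      proof (rule AE_I2)
        fix x assume "x \<in> space M"
        from bound[OF p this] show "X p x \<in> {- c (fst p)..c (fst p)}" by (simp add: abs_le_iff)
      qed
    qed (rule reflexive)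
    have H1: "P.prob {x \<in> space M. \<bar>(\<Sum>p\<in>Idx. X p x) - d\<bar> \<ge> \<epsilon>}
        \<le> 2 * exp (- 2 * \<epsilon>\<^sup>2 / (\<Sum>p\<in>Idx. (c (fst p) - - c (fst p))\<^sup>2))"
      using H.Hoeffding_ineq_abs_ge[OF _ Qpos] \<epsilon> mu by simp
    have sub: "{\<omega> \<in> space M. \<not> \<bar>est \<omega> - d\<bar> \<le> \<epsilon>} \<subseteq> {x \<in> space M. \<bar>(\<Sum>p\<in>Idx. X p x) - d\<bar> \<ge> \<epsilon>}"
      by (auto simp: sumX)
    have setm: "{x \<in> space M. \<bar>(\<Sum>p\<in>Idx. X p x) - d\<bar> \<ge> \<epsilon>} \<in> sets M"
    proof -
      have "(\<lambda>x. \<Sum>p\<in>Idx. X p x) \<in> borel_measurable M" using Xmeas by (rule borel_measurable_sum)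
      then show ?thesis by measurable
    qed
    define L where "L = ln (2 * N / \<delta>)"
    define e2 where "e2 = \<epsilon>\<^sup>2 * (real m)\<^sup>2"
    have e2pos: "e2 > 0" using \<epsilon> m by (simp add: e2_def)
    have "2 * L / e2 * S \<le> real T" using Tb unfolding L_def e2_def S_def .
    then have "2 * L * S / e2 \<le> real T" by simp
    then have A: "2 * L * S \<le> real T * e2" using e2pos by (simp add: pos_divide_le_eq)
    have B: "L \<le> real T * e2 / (2 * S)" using A Spos by (simp add: pos_le_divide_eq ac_simps)
    have C: "2 * \<epsilon>\<^sup>2 / (4 * S / (real T * (real m)\<^sup>2)) = real T * e2 / (2 * S)"
      using Spos T_pos m by (simp add: e2_def field_simps)
    have "exp (- 2 * \<epsilon>\<^sup>2 / (\<Sum>p\<in>Idx. (c (fst p) - - c (fst p))\<^sup>2)) = exp (- (real T * e2 / (2 * S)))"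
      unfolding Q using C by (simp add: minus_divide_left[symmetric])
    also have "\<dots> \<le> exp (- L)" using B by simp
    also have "\<dots> = \<delta> / (2 * N)" unfolding L_def using N \<delta> by (simp add: exp_minus exp_ln)
    finally have "2 * exp (- 2 * \<epsilon>\<^sup>2 / (\<Sum>p\<in>Idx. (c (fst p) - - c (fst p))\<^sup>2)) \<le> \<delta> / N"
      using N by simp
    moreover have "measure M {\<omega> \<in> space M. \<not> \<bar>est \<omega> - d\<bar> \<le> \<epsilon>} \<le> P.prob {x \<in> space M. \<bar>(\<Sum>p\<in>Idx. X p x) - d\<bar> \<ge> \<epsilon>}"
      by (rule P.finite_measure_mono[OF sub setm])
    ultimately show ?thesis using H1 by linarith
  qed
  then show "measure (sample_space D m Tk)
       {\<omega> \<in> space (sample_space D m Tk). \<not> \<bar>shapley_estimator U m T Tk w z \<omega> - dist_shapley U D m z\<bar> \<le> \<epsilon>}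
       \<le> \<delta> / N" by (simp add: M_def est_def d_def)
qed

theorem theoremE1:
  fixes D :: "'z measure" and U :: "'z list \<Rightarrow> real" and \<beta> :: "nat \<Rightarrow> real"
    and m T :: nat and Tk :: "nat \<Rightarrow> nat" and w :: "nat \<Rightarrow> real"
    and Z :: "'z set" and \<epsilon> \<delta> :: real
  assumes D: "prob_space D"
    and U: "potential D U"
    and \<beta>_mono: "antimono \<beta>" and \<beta>_range: "\<And>k. 0 \<le> \<beta> k \<and> \<beta> k \<le> 1"
    and stable: "deletion_stable D U \<beta>"
    and Z: "finite Z" "Z \<noteq> {}" "Z \<subseteq> space D"
    and \<epsilon>: "\<epsilon> > 0" and \<delta>: "0 < \<delta>" "\<delta> < 1"
    and w_pos: "\<And>k. k \<in> {1..m} \<Longrightarrow> w k > 0"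
    and w_sum: "(\<Sum>k\<in>{1..m}. w k) = 1"
    and T_pos: "T > 0"
    and Tk: "\<And>k. k \<in> {1..m} \<Longrightarrow> real (Tk k) = w k * real T"
  shows "(\<forall>z\<in>Z. (\<integral>\<omega>. shapley_estimator U m T Tk w z \<omega> \<partial>(sample_space D m Tk))
                  = dist_shapley U D m z)
       \<and> (real T \<ge> 2 * ln (2 * real (card Z) / \<delta>) / (\<epsilon>\<^sup>2 * (real m)\<^sup>2)
                      * (\<Sum>k\<in>{1..m}. (\<beta> k)\<^sup>2 / w k)
          \<longrightarrow> measure (sample_space D m Tk)
                {\<omega> \<in> space (sample_space D m Tk).
                   \<forall>z\<in>Z. \<bar>shapley_estimator U m T Tk w z \<omega> - dist_shapley U D m z\<bar> \<le> \<epsilon>}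
              \<ge> 1 - \<delta>)"
proof -
  have m: "m \<ge> 1"
  proof (rule ccontr)
    assume "\<not> m \<ge> 1"
    then have "m = 0" by simp
    then show False using w_sum by simp
  qed
  have zD: "z \<in> space D" if "z \<in> Z" for z using Z(3) that by blast
  have part1: "\<forall>z\<in>Z. (\<integral>\<omega>. shapley_estimator U m T Tk w z \<omega> \<partial>(sample_space D m Tk)) = dist_shapley U D m z"
  proof
    fix z assume z: "z \<in> Z"
    show "(\<integral>\<omega>. shapley_estimator U m T Tk w z \<omega> \<partial>(sample_space D m Tk)) = dist_shapley U D m z"
      by (rule mean_eq[where Tk=Tk and w=w and T=T, OF D U zD[OF z] m w_pos T_pos Tk])
  qed
  have part2: "measure (sample_space D m Tk)
                {\<omega> \<in> space (sample_space D m Tk).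
                   \<forall>z\<in>Z. \<bar>shapley_estimator U m T Tk w z \<omega> - dist_shapley U D m z\<bar> \<le> \<epsilon>}
              \<ge> 1 - \<delta>"
    if Tb: "real T \<ge> 2 * ln (2 * real (card Z) / \<delta>) / (\<epsilon>\<^sup>2 * (real m)\<^sup>2)
                      * (\<Sum>k\<in>{1..m}. (\<beta> k)\<^sup>2 / w k)"
  proof -
    define M where "M = sample_space D m Tk"
    interpret P: prob_space M unfolding M_def sample_space_def using D by (intro prob_space_PiM) auto
    define N where "N = real (card Z)"
    have N: "N > 0" using Z(1,2) by (simp add: N_def card_gt_0_iff)
    define bad where "bad = (\<lambda>z. {\<omega> \<in> space M. \<not> \<bar>shapley_estimator U m T Tk w z \<omega> - dist_shapley U D m z\<bar> \<le> \<epsilon>})"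
    have \<beta>nn: "\<And>k. 0 \<le> \<beta> k" using \<beta>_range by blast
    have badS: "bad z \<in> sets M" and badM: "measure M (bad z) \<le> \<delta> / N" if "z \<in> Z" for z
      using hoeff_z[where Tk=Tk and w=w and T=T, OF D U stable zD[OF that] m w_pos T_pos Tk \<epsilon> N \<delta>(1) \<beta>nn Tb[folded N_def]]
      unfolding bad_def M_def by blast+
    have UN: "(\<Union>z\<in>Z. bad z) \<in> sets M" using badS Z(1) by (intro sets.finite_UN) auto
    have eq: "{\<omega> \<in> space M. \<forall>z\<in>Z. \<bar>shapley_estimator U m T Tk w z \<omega> - dist_shapley U D m z\<bar> \<le> \<epsilon>}
        = space M - (\<Union>z\<in>Z. bad z)" by (auto simp: bad_def)
    have "measure M (\<Union>z\<in>Z. bad z) \<le> (\<Sum>z\<in>Z. measure M (bad z))"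
      using badS Z(1) by (intro P.finite_measure_subadditive_finite) auto
    also have "\<dots> \<le> (\<Sum>z\<in>Z. \<delta> / N)" using badM by (intro sum_mono) auto
    also have "\<dots> = \<delta>" using N by (simp add: N_def)
    finally have "measure M (\<Union>z\<in>Z. bad z) \<le> \<delta>" .
    then have "measure M (space M - (\<Union>z\<in>Z. bad z)) \<ge> 1 - \<delta>"
      using P.prob_compl[OF UN] by simp
    then have "measure M {\<omega> \<in> space M. \<forall>z\<in>Z. \<bar>shapley_estimator U m T Tk w z \<omega> - dist_shapley U D m z\<bar> \<le> \<epsilon>} \<ge> 1 - \<delta>"
      by (simp only: eq)
    then show ?thesis by (simp only: M_def)
  qed
  show ?thesis using part1 part2 by blast
qed

end
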